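(* In the category $\mathbb{T}_\alpha$, the socle of $V^*$ is $V_*=V^*_{\aleph_0}$, and for every infinite cardinal $\beta\le\alpha$ the socle of $V^*/V^*_\beta$ is $V^*_{\beta^+}/V^*_\beta$, which is a simple module. Consequently the transfinite socle filtration of $V^*$ is the chain $0\subset V^*_{\aleph_0}\subset\cdots\subset V^*_\beta\subset\cdots\subset V^*_\alpha\subset V^*$ of subspaces $V^*_\beta$, $\beta$ ranging over infinite cardinals $\le\alpha^+$.
   Context: $\mathbb{K}$ is an algebraically closed field of characteristic $0$, $\alpha$ an infinite cardinal, $\beta^+$ the successor cardinal. $V,V_*$ are $\alpha$-dimensional with a nondegenerate pairing $\mathbf{p}:V_*\otimes V\to\mathbb{K}$ admitting dual bases indexed by $\Sigma$, $|\Sigma|=\alpha$. Elements of $V^*=\operatorname{Hom}(V,\mathbb{K})$ are $\Sigma$-indexed row vectors, $V_*$ the finitely supported ones; for an infinite cardinal $\beta\le\alpha^+$, $V^*_\beta$ is the subspace of row vectors with fewer than $\beta$ nonzero entries ($V^*_{\alpha^+}=V^*$). $\mathfrak{gl}^M=\{x\in\operatorname{End}(V_* ):x^*(V)\subseteq V\}$ (matrices with finitely many nonzero entries in each row and column) acts on $V$ by left multiplication and on $V^*$ by $g\cdot v=-vg$. $\mathbb{T}_\alpha$ is the smallest full monoidal subcategory of $\mathfrak{gl}^M$-mod containing $V$ and $V^*$ and closed under subquotients. The transfinite socle filtration of $X$ is defined by $\operatorname{soc}^1X=\operatorname{soc}X$, $\operatorname{soc}^{b+1}X$ the preimage in $X$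 of $\operatorname{soc}(X/\operatorname{soc}^bX)$, and at limit ordinals the union of the previous terms. *)

theory Defs
  imports Main "HOL-Computational_Algebra.Polynomial"
begin

definition alg_closed :: "'k::field itself \<Rightarrow> bool" where
  "alg_closed _ \<longleftrightarrow> (\<forall>p :: 'k poly. 0 < degree p \<longrightarrow> (\<exists>x. poly p x = 0))"

text \<open>Elements of V^* are Sigma-indexed row vectors, i.e. functions 's => 'k.
  glM: Sigma x Sigma matrices with finitely many nonzero entries in each row and column.\<close>
definition glM :: "('s \<Rightarrow> 's \<Rightarrow> 'k::field) set" where
  "glM = {g. (\<forall>i. finite {j. g i j \<noteq> 0}) \<and> (\<forall>j. finite {i. g i j \<noteq> 0})}"

definition act :: "('s \<Rightarrow> 's \<Rightarrow> 'k::field) \<Rightarrow> ('s \<Rightarrow> 'k) \<Rightarrow> ('s \<Rightarrow> 'k)" where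
  "act g v = (\<lambda>j. - (\<Sum>i\<in>{i. g i j \<noteq> 0}. v i * g i j))"

definition submod :: "('s \<Rightarrow> 'k::field) set \<Rightarrow> bool" where
  "submod M \<longleftrightarrow> (\<lambda>_. 0) \<in> M
     \<and> (\<forall>u\<in>M. \<forall>v\<in>M. (\<lambda>i. u i + v i) \<in> M)
     \<and> (\<forall>c. \<forall>v\<in>M. (\<lambda>i. c * v i) \<in> M)
     \<and> (\<forall>g\<in>glM. \<forall>v\<in>M. act g v \<in> M)"

text \<open>M/W is a simple module (W, M submodules of V^*, W a proper submodule of M
  with nothing strictly in between).\<close>
definition rel_simple :: "('s \<Rightarrow> 'k::field) set \<Rightarrow> ('s \<Rightarrow> 'k) set \<Rightarrow> bool" where
  "rel_simple W M \<longleftrightarrow> submod W \<and> submod M \<and> W \<subset> M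
     \<and> (\<forall>N. submod N \<and> W \<subseteq> N \<and> N \<subseteq> M \<longrightarrow> N = W \<or> N = M)"

text \<open>Preimage in V^* of the socle of V^*/W: the sum of W and all submodules M
  with M/W simple (the smallest submodule containing them).\<close>
definition soc_pre :: "('s \<Rightarrow> 'k::field) set \<Rightarrow> ('s \<Rightarrow> 'k) set" where
  "soc_pre W = \<Inter> {N. submod N \<and> W \<subseteq> N \<and> (\<forall>M. rel_simple W M \<longrightarrow> M \<subseteq> N)}"

text \<open>Terms soc^b V^* (b \<ge> 1) of the transfinite socle filtration of V^*:
  generated from soc^1 by successor steps and unions (limit steps).\<close>
inductive_set soc_filt :: "('s \<Rightarrow> 'k::field) set set" where
  base: "soc_pre {\<lambda>_. 0} \<in> soc_filt"
| succ: "X \<in> soc_filt \<Longrightarrow> soc_pre X \<in> soc_filt"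
| lim: "S \<noteq> {} \<Longrightarrow> \<forall>X\<in>S. X \<in> soc_filt \<Longrightarrow> \<Union> S \<in> soc_filt"

definition Vstar :: "'c rel \<Rightarrow> ('s \<Rightarrow> 'k::field) set" where
  "Vstar \<beta> = {v. (card_of {i. v i \<noteq> 0}, \<beta>) \<in> ordLess}"

definition inf_card :: "'c rel \<Rightarrow> bool" where
  "inf_card \<beta> \<longleftrightarrow> Card_order \<beta> \<and> infinite (Field \<beta>)"

end

theory Submission
  imports Defs
begin

unbundle cardinal_syntax

definition spt :: "('s \<Rightarrow> 'k::field) \<Rightarrow> 's set" where "spt v = {i. v i \<noteq> 0}"

lemma act_spt:
  assumes "g \<in> glM"
  shows "spt (act g v) \<subseteq> (\<Union>i\<in>spt v. {j. g i j \<noteq> 0})"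
proof
  fix j assume "j \<in> spt (act g v)"
  hence "(\<Sum>i\<in>{i. g i j \<noteq> 0}. v i * g i j) \<noteq> 0" by (simp add: spt_def act_def)
  then obtain i where "i \<in> {i. g i j \<noteq> 0}" "v i * g i j \<noteq> 0"
    by (meson sum.not_neutral_contains_not_neutral)
  thus "j \<in> (\<Union>i\<in>spt v. {j. g i j \<noteq> 0})" by (auto simp: spt_def)
qed

lemma gen:
  fixes v w :: "'s \<Rightarrow> 'k::field"
  assumes M: "submod M" and v: "v \<in> M"
    and tau: "\<forall>j\<in>spt w. tau j \<in> spt v"
    and fib: "\<forall>i. finite {j\<in>spt w. tau j = i}"
  shows "w \<in> M"
proof -
  define g where "g = (\<lambda>i j. if j \<in> spt w \<and> tau j = i then w j / v i else 0)"
  have col: "{i. g i j \<noteq> 0} = (if j \<in> spt w then {tau j} else {})" for j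
    using tau by (auto simp: g_def spt_def)
  have row: "{j. g i j \<noteq> 0} \<subseteq> {j\<in>spt w. tau j = i}" for i
    by (auto simp: g_def split: if_splits)
  have r: "\<forall>i. finite {j. g i j \<noteq> 0}" using row fib finite_subset by blast
  have "g \<in> glM" unfolding glM_def using col r by auto
  hence "act g v \<in> M" using M v by (auto simp: submod_def)
  moreover have "act g v = (\<lambda>j. - w j)"
  proof
    fix j show "act g v j = - w j"
    proof (cases "j \<in> spt w")
      case True
      with tau have "v (tau j) \<noteq> 0" by (auto simp: spt_def)
      have "act g v j = - (v (tau j) * g (tau j) j)" by (simp add: act_def col True)
      thus ?thesis using True \<open>v (tau j) \<noteq> 0\<close> by (simp add: g_def)
    next
      case False thus ?thesis by (simp add: act_def col spt_def)
    qed
  qed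
  ultimately have mem: "(\<lambda>j. - w j) \<in> M" by simp
  have sc: "\<forall>c. \<forall>v\<in>M. (\<lambda>i. c*v i) \<in> M" using M by (simp add: submod_def)
  have "(\<lambda>i. (-1) * (\<lambda>j. - w j) i) \<in> M" by (rule sc[rule_format, OF mem])
  thus ?thesis by simp
qed

lemma submod_UNIV: "submod UNIV" by (simp add: submod_def)

lemma Vstar_eq: "Vstar \<beta> = {v. ( |spt v| <o \<beta>)}" by (simp add: Vstar_def spt_def)

lemma submod_Vstar:
  fixes \<beta> :: "'c rel"
  assumes b: "Card_order \<beta>" "infinite (Field \<beta>)"
  shows "submod (Vstar \<beta> :: ('s \<Rightarrow> 'k::field) set)"
proof -
  have fin: "|A| <o \<beta>" if "finite A" for A :: "'s set"
  proof (rule finite_ordLess_infinite)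
    show "Well_order |A|" by (rule card_of_Well_order)
    show "Well_order \<beta>" using b(1) by (rule card_order_on_well_order_on)
  qed (use that b in \<open>auto simp: Field_card_of\<close>)
  have sub: "|A| <o \<beta>" if "A \<subseteq> B" "|B| <o \<beta>" for A B :: "'s set"
    using card_of_mono1[OF that(1)] that(2) ordLeq_ordLess_trans by blast
  show ?thesis unfolding submod_def Vstar_eq
  proof (intro conjI ballI allI; simp)
    show "|spt (\<lambda>_::'s. 0::'k)| <o \<beta>" by (rule fin) (simp add: spt_def)
  next
    fix u v :: "'s \<Rightarrow> 'k" assume "|spt u| <o \<beta>" "|spt v| <o \<beta>"
    hence "|spt u \<union> spt v| <o \<beta>" using card_of_Un_ordLess_infinite_Field b by blast
    thus "|spt (\<lambda>i. u i + v i)| <o \<beta>" by (rule sub[rotated]) (auto simp: spt_def)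
  next
    fix c and v :: "'s \<Rightarrow> 'k" assume "|spt v| <o \<beta>"
    thus "|spt (\<lambda>i. c * v i)| <o \<beta>" by (rule sub[rotated]) (auto simp: spt_def)
  next
    fix g :: "'s \<Rightarrow> 's \<Rightarrow> 'k" and v :: "'s \<Rightarrow> 'k" assume g: "g \<in> glM" and v: "|spt v| <o \<beta>"
    have rows: "finite {j. g i j \<noteq> 0}" for i using g by (simp add: glM_def)
    have "|\<Union>i\<in>spt v. {j. g i j \<noteq> 0}| <o \<beta>"
    proof (cases "finite (spt v)")
      case True thus ?thesis using rows by (intro fin) auto
    next
      case False
      have "|\<Union>i\<in>spt v. {j. g i j \<noteq> 0}| \<le>o |spt v|"
      proof (rule card_of_UNION_ordLeq_infinite[OF False])
        show "|spt v| \<le>o |spt v|" by (simp add: ordLeq_refl card_of_Card_order)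
        show "\<forall>i\<in>spt v. |{j. g i j \<noteq> 0}| \<le>o |spt v|"
          using rows False finite_ordLess_infinite card_of_Well_order
          by (metis Field_card_of ordLess_imp_ordLeq)
      qed
      thus ?thesis using v ordLeq_ordLess_trans by blast
    qed
    thus "|spt (act g v)| <o \<beta>" using act_spt[OF g] sub by blast
  qed
qed

lemma gen_inj:
  fixes v w :: "'s \<Rightarrow> 'k::field"
  assumes "submod M" "v \<in> M" "|spt w| \<le>o |spt v|"
  shows "w \<in> M"
proof -
  obtain f where f: "inj_on f (spt w)" "f ` spt w \<subseteq> spt v"
    using assms(3) card_of_ordLeq[of "spt w" "spt v"] by blast
  show ?thesis
  proof (rule gen[OF assms(1,2), of w f])
    show "\<forall>j\<in>spt w. f j \<in> spt v" using f by auto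
    show "\<forall>i. finite {j \<in> spt w. f j = i}"
    proof
      fix i
      have "{j \<in> spt w. f j = i} = f -` {i} \<inter> spt w" by auto
      thus "finite {j \<in> spt w. f j = i}" using finite_vimage_IntI[OF _ f(1)] by simp
    qed
  qed
qed

lemma gen_fin:
  fixes v w :: "'s \<Rightarrow> 'k::field"
  assumes "submod M" "v \<in> M" "v \<noteq> (\<lambda>_. 0)" "finite (spt w)"
  shows "w \<in> M"
proof -
  obtain i0 where i0: "v i0 \<noteq> 0" using assms(3) by auto
  show ?thesis
    by (rule gen[OF assms(1,2), of w "\<lambda>_. i0"]) (use i0 assms(4) in \<open>auto simp: spt_def\<close>)
qed

lemma ind_spt: "\<exists>v::'s \<Rightarrow> 'k::field. spt v = A"
  by (rule exI[of _ "\<lambda>i. if i \<in> A then 1 else 0"]) (auto simp: spt_def)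

lemma Vstar_cardSuc:
  assumes "Card_order \<beta>"
  shows "Vstar (cardSuc \<beta>) = ({v. |spt v| \<le>o \<beta>} :: ('s \<Rightarrow> 'k::field) set)"
  unfolding Vstar_eq by (rule Collect_cong) (rule cardSuc_ordLeq_ordLess[OF assms card_of_Card_order])

lemma Vstar_iso:
  assumes "\<beta> =o \<beta>'"
  shows "Vstar \<beta> = Vstar \<beta>'"
  unfolding Vstar_eq apply (rule Collect_cong)
  using assms ordLess_ordIso_trans[of _ \<beta> \<beta>'] ordLess_ordIso_trans[of _ \<beta>' \<beta>] ordIso_symmetric[OF assms] by blast

lemma Fin_Vstar: "{v. finite (spt v)} = Vstar natLeq"
  by (simp add: Vstar_eq finite_iff_ordLess_natLeq)

lemma infinite_mono:
  assumes "Card_order r" "Card_order r'" "r \<le>o r'" "infinite (Field r)"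
  shows "infinite (Field r')"
proof
  assume fin: "finite (Field r')"
  have "|Field r| \<le>o |Field r'|"
    using card_of_Field_ordIso[OF assms(1)] card_of_Field_ordIso[OF assms(2)] assms(3)
    by (meson ordIso_ordLeq_trans ordLeq_ordIso_trans ordIso_symmetric)
  thus False using card_of_ordLeq_finite fin assms(4) by blast
qed

lemma soc_pre_char:
  assumes "submod R" "rel_simple W R" "\<forall>M. rel_simple W M \<longrightarrow> M \<subseteq> R"
  shows "soc_pre W = R"
proof
  show "soc_pre W \<subseteq> R" unfolding soc_pre_def using assms by (auto simp: rel_simple_def)
  show "R \<subseteq> soc_pre W" unfolding soc_pre_def using assms(2) by auto
qed

lemma submod_zero: "submod {\<lambda>_::'s. 0::'k::field}"
  by (simp add: submod_def act_def)

lemma soc_zero: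
  assumes "infinite (UNIV :: 's set)"
  shows "soc_pre {\<lambda>_::'s. 0::'k::field} = {v. finite (spt v)}"
proof -
  let ?F = "{v::'s \<Rightarrow> 'k. finite (spt v)}"
  have sF: "submod ?F" unfolding Fin_Vstar
    by (rule submod_Vstar) (rule natLeq_Card_order, simp add: Field_natLeq)
  fix a :: 's
  obtain e :: "'s \<Rightarrow> 'k" where e: "spt e = {a}" using ind_spt[of "{a}"] by (elim exE)
  have "a \<in> spt e" using e by simp
  hence "e a \<noteq> 0" by (simp add: spt_def)
  hence e0: "e \<noteq> (\<lambda>_. 0)" by (metis)
  have big: "?F \<subseteq> N" if "submod N" "v \<in> N" "v \<noteq> (\<lambda>_. 0)" for N v
  proof
    fix w assume "w \<in> ?F"
    hence "finite (spt w)" by simp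
    thus "w \<in> N" by (rule gen_fin[OF that])
  qed
  have zF: "(\<lambda>_. 0) \<in> ?F" by (simp add: spt_def)
  have eF: "e \<in> ?F" using e by simp
  have rs: "rel_simple {\<lambda>_. 0} ?F"
    unfolding rel_simple_def
  proof (intro conjI allI impI)
    show "submod {\<lambda>_::'s. 0::'k}" by (rule submod_zero)
    show "submod ?F" by (rule sF)
    show "{\<lambda>_. 0} \<subset> ?F" using zF eF e0 by blast
    fix N assume N: "submod N \<and> {\<lambda>_. 0} \<subseteq> N \<and> N \<subseteq> ?F"
    show "N = {\<lambda>_. 0} \<or> N = ?F"
    proof (cases "\<exists>v\<in>N. v \<noteq> (\<lambda>_. 0)")
      case True
      then obtain v where "v \<in> N" "v \<noteq> (\<lambda>_. 0)" by blast
      with big N have "?F \<subseteq> N" by blast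
      with N show ?thesis by blast
    next
      case False with N show ?thesis by blast
    qed
  qed
  show ?thesis
  proof (rule soc_pre_char[OF sF rs], intro allI impI)
    fix M :: "('s \<Rightarrow> 'k) set" assume M: "rel_simple {\<lambda>_. 0} M"
    have ps: "{\<lambda>_. 0} \<subset> M" and sM: "submod M"
      and mx: "\<forall>N. submod N \<and> {\<lambda>_. 0} \<subseteq> N \<and> N \<subseteq> M \<longrightarrow> N = {\<lambda>_. 0} \<or> N = M"
      using M unfolding rel_simple_def by blast+
    from ps obtain v where "v \<in> M" "v \<noteq> (\<lambda>_. 0)" by blast
    hence FM: "?F \<subseteq> M" by (rule big[OF sM])
    have "{\<lambda>_. 0} \<subseteq> ?F" using zF by blast
    hence "?F = {\<lambda>_. 0} \<or> ?F = M" using mx sF FM by blast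
    thus "M \<subseteq> ?F" using e0 eF by blast
  qed
qed

lemma soc_beta:
  fixes \<beta> :: "'c rel"
  assumes b1: "Card_order \<beta>" and b2: "infinite (Field \<beta>)" and b3: "\<beta> \<le>o |UNIV :: 's set|"
  shows "soc_pre (Vstar \<beta> :: ('s \<Rightarrow> 'k::field) set) = Vstar (cardSuc \<beta>)
     \<and> rel_simple (Vstar \<beta> :: ('s \<Rightarrow> 'k) set) (Vstar (cardSuc \<beta>))"
proof -
  let ?V = "Vstar \<beta> :: ('s \<Rightarrow> 'k) set"
  let ?P = "Vstar (cardSuc \<beta>) :: ('s \<Rightarrow> 'k) set"
  have sV: "submod ?V" by (rule submod_Vstar[OF b1 b2])
  have sP: "submod ?P"
    by (rule submod_Vstar[OF cardSuc_Card_order[OF b1]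
          infinite_mono[OF b1 cardSuc_Card_order[OF b1] cardSuc_ordLeq[OF b1] b2]])
  have P_eq: "?P = {v. |spt v| \<le>o \<beta>}" by (rule Vstar_cardSuc[OF b1])
  have V_eq: "?V = {v. |spt v| <o \<beta>}" by (rule Vstar_eq)
  have Wb: "Well_order \<beta>" using b1 by (rule card_order_on_well_order_on)
  have FI: "|Field \<beta>| =o \<beta>" by (rule card_of_Field_ordIso[OF b1])
  have "|Field \<beta>| \<le>o |UNIV :: 's set|" by (rule ordIso_ordLeq_trans[OF FI b3])
  then obtain B :: "'s set" where "|Field \<beta>| =o |B|"
    using internalize_card_of_ordLeq2[of "Field \<beta>" "UNIV :: 's set"] by blast
  hence B: "|B| =o \<beta>" by (rule ordIso_transitive[OF ordIso_symmetric FI])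
  obtain w0 :: "'s \<Rightarrow> 'k" where w0: "spt w0 = B" using ind_spt[of B] by (elim exE)
  have "|spt w0| \<le>o \<beta>" using B unfolding w0 ordIso_iff_ordLeq by (elim conjE)
  hence w0P: "w0 \<in> ?P" unfolding P_eq by simp
  have "\<not> |spt w0| <o \<beta>" using not_ordLess_ordIso[of "|B|" \<beta>] B unfolding w0 by blast
  hence w0V: "w0 \<notin> ?V" unfolding V_eq by simp
  have VP: "?V \<subseteq> ?P" unfolding V_eq P_eq by (auto intro: ordLess_imp_ordLeq)
  have big: "?P \<subseteq> N" if "submod N" "v \<in> N" "\<beta> \<le>o |spt v|" for N v
  proof
    fix w assume "w \<in> ?P"
    hence "|spt w| \<le>o \<beta>" using P_eq by blast
    hence "|spt w| \<le>o |spt v|" using that(3) by (rule ordLeq_transitive)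
    thus "w \<in> N" by (rule gen_inj[OF that(1,2)])
  qed
  have not_lt: "\<beta> \<le>o |spt v|" if "v \<notin> ?V" for v
  proof -
    have "\<not> |spt v| <o \<beta>" using that unfolding V_eq by simp
    thus ?thesis using ordLess_or_ordLeq[OF card_of_Well_order Wb, of "spt v"] by blast
  qed
  have rs: "rel_simple ?V ?P"
    unfolding rel_simple_def
  proof (intro conjI allI impI)
    show "submod ?V" "submod ?P" by (rule sV, rule sP)
    show "?V \<subset> ?P" using VP w0P w0V by blast
    fix N assume N: "submod N \<and> ?V \<subseteq> N \<and> N \<subseteq> ?P"
    show "N = ?V \<or> N = ?P"
    proof (cases "N \<subseteq> ?V")
      case True with N show ?thesis by blast
    next
      case False
      then obtain v where "v \<in> N" "v \<notin> ?V" by blast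
      with big[of N v] not_lt N have "?P \<subseteq> N" by blast
      with N show ?thesis by blast
    qed
  qed
  have "soc_pre ?V = ?P"
  proof (rule soc_pre_char[OF sP rs], intro allI impI subsetI)
    fix M v assume M: "rel_simple ?V M" and v: "v \<in> M"
    show "v \<in> ?P"
    proof (rule ccontr)
      assume nv: "v \<notin> ?P"
      hence "v \<notin> ?V" using VP by blast
      hence "\<beta> \<le>o |spt v|" by (rule not_lt)
      hence "?P \<subseteq> M" using big[of M v] M v by (auto simp: rel_simple_def)
      hence "?P = ?V \<or> ?P = M" using M sP VP unfolding rel_simple_def by blast
      thus False using w0P w0V nv v by blast
    qed
  qed
  with rs show ?thesis by blast
qed

lemma fin_less:
  assumes "Card_order \<beta>" "infinite (Field \<beta>)" "finite A"
  shows "|A| <o \<beta>"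
proof (rule finite_ordLess_infinite)
  show "Well_order |A|" by (rule card_of_Well_order)
  show "Well_order \<beta>" using assms(1) by (rule card_order_on_well_order_on)
qed (use assms in \<open>auto simp: Field_card_of\<close>)

definition Wle :: "'s set \<Rightarrow> ('s \<Rightarrow> 'k::field) set" where
  "Wle A = {v. |spt v| \<le>o |A|}"



lemma Vstar_union_filt:
  fixes r :: "'c rel"
  assumes inf: "infinite (UNIV :: 's set)"
    and r: "Card_order r" "infinite (Field r)"
    and IH: "\<forall>v. v \<in> (Vstar r :: ('s \<Rightarrow> 'k::field) set) \<longrightarrow> infinite (spt v) \<longrightarrow> (Wle (spt v) :: ('s \<Rightarrow> 'k) set) \<in> soc_filt"
  shows "(Vstar r :: ('s \<Rightarrow> 'k) set) \<in> soc_filt"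
proof -
  let ?F = "{v::'s \<Rightarrow> 'k. finite (spt v)}"
  let ?S = "insert ?F {Wle (spt v) | v. v \<in> (Vstar r :: ('s \<Rightarrow> 'k) set) \<and> infinite (spt v)}"
  have F0: "soc_pre {\<lambda>_::'s. 0::'k} \<in> soc_filt" by (rule soc_filt.base)
  have F: "?F \<in> soc_filt" using F0 unfolding soc_zero[OF inf] .
  have "?S \<noteq> {}" by blast
  moreover have "\<forall>X\<in>?S. X \<in> soc_filt"
  proof
    fix X assume "X \<in> ?S"
    hence "X = ?F \<or> (\<exists>v. X = Wle (spt v) \<and> v \<in> (Vstar r :: ('s \<Rightarrow> 'k) set) \<and> infinite (spt v))" by blast
    thus "X \<in> soc_filt" using F IH by metis
  qed
  ultimately have A: "\<Union>?S \<in> soc_filt" by (rule soc_filt.lim)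
  have E: "\<Union>?S = Vstar r"
  proof
    show "\<Union>?S \<subseteq> Vstar r"
    proof
      fix w assume "w \<in> \<Union>?S"
      then obtain X where X: "X \<in> ?S" "w \<in> X" by blast
      show "w \<in> Vstar r"
      proof (cases "X = ?F")
        case True then have "finite (spt w)" using X by simp
        then show ?thesis using fin_less[OF r] by (simp add: Vstar_eq)
      next
        case False
        then obtain v :: "'s \<Rightarrow> 'k" where v: "X = Wle (spt v)" "v \<in> Vstar r" using X(1) by blast
        have "|spt w| \<le>o |spt v|" using X(2) v(1) by (simp add: Wle_def)
        moreover have "|spt v| <o r" using v(2) by (simp add: Vstar_eq)
        ultimately have "|spt w| <o r" by (rule ordLeq_ordLess_trans)
        thus ?thesis by (simp add: Vstar_eq)
      qed
    qed
    show "Vstar r \<subseteq> \<Union>?S"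
    proof
      fix v assume v: "v \<in> (Vstar r :: ('s \<Rightarrow> 'k) set)"
      show "v \<in> \<Union>?S"
      proof (cases "finite (spt v)")
        case True thus ?thesis by blast
      next
        case False
        have "v \<in> Wle (spt v)" by (simp add: Wle_def ordLeq_refl card_of_Card_order)
        moreover have "Wle (spt v) \<in> ?S" using v False by blast
        ultimately show ?thesis by (rule UnionI[rotated])
      qed
    qed
  qed
  show ?thesis using A by (simp only: E)
qed

lemma Wle_filt:
  assumes inf: "infinite (UNIV :: 's set)"
  shows "infinite A \<Longrightarrow> (Wle (A :: 's set) :: ('s \<Rightarrow> 'k::field) set) \<in> soc_filt"
proof -
  have "\<forall>A::'s set. r = card_of A \<longrightarrow> infinite A \<longrightarrow> (Wle A :: ('s \<Rightarrow> 'k) set) \<in> soc_filt" for r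
  proof (induction r rule: wf_induct[OF wf_ordLess])
    case (1 r)
    show ?case
    proof (intro allI impI)
      fix A :: "'s set" assume rA: "r = card_of A" and iA: "infinite A"
      have cA: "Card_order |A|" by (rule card_of_Card_order)
      have fA: "infinite (Field |A| )" using iA by (simp add: Field_card_of)
      have "(Vstar |A| :: ('s \<Rightarrow> 'k) set) \<in> soc_filt"
      proof (rule Vstar_union_filt[OF inf cA fA], intro allI impI)
        fix v :: "'s \<Rightarrow> 'k" assume "v \<in> Vstar |A|" "infinite (spt v)"
        hence "(card_of (spt v), r) \<in> ordLess" using rA by (simp add: Vstar_eq)
        hence "\<forall>A::'s set. card_of (spt v) = card_of A \<longrightarrow> infinite A \<longrightarrow> (Wle A :: ('s \<Rightarrow> 'k) set) \<in> soc_filt"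
          by (rule mp[OF spec[OF 1]])
        hence "card_of (spt v) = card_of (spt v) \<longrightarrow> infinite (spt v) \<longrightarrow> (Wle (spt v) :: ('s \<Rightarrow> 'k) set) \<in> soc_filt"
          by (rule spec)
        thus "(Wle (spt v) :: ('s \<Rightarrow> 'k) set) \<in> soc_filt" using \<open>infinite (spt v)\<close> by simp
      qed
      hence "soc_pre (Vstar |A| :: ('s \<Rightarrow> 'k) set) \<in> soc_filt" by (rule soc_filt.succ)
      moreover have "soc_pre (Vstar |A| :: ('s \<Rightarrow> 'k) set) = Vstar (cardSuc |A| )"
        using soc_beta[OF cA fA card_of_mono1[OF subset_UNIV]] by (elim conjE)
      moreover have "(Vstar (cardSuc |A| ) :: ('s \<Rightarrow> 'k) set) = Wle A"
        by (simp add: Vstar_cardSuc[OF cA] Wle_def)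
      ultimately show "(Wle A :: ('s \<Rightarrow> 'k) set) \<in> soc_filt" by simp
    qed
  qed
  thus "infinite A \<Longrightarrow> (Wle A :: ('s \<Rightarrow> 'k) set) \<in> soc_filt" by blast
qed

definition RHS :: "('s \<Rightarrow> 'k::field) set set" where
  "RHS = {Vstar \<beta> | \<beta> :: 's set rel. inf_card \<beta> \<and> (\<beta>, cardSuc (card_of (UNIV :: 's set))) \<in> ordLeq}"

definition dclosed :: "('s \<Rightarrow> 'k::field) set \<Rightarrow> bool" where
  "dclosed U \<longleftrightarrow> (\<forall>v\<in>U. \<forall>w. |spt w| \<le>o |spt v| \<longrightarrow> w \<in> U)"

lemma copy_card:
  fixes r :: "'c rel"
  assumes r: "Card_order r" and le: "r \<le>o |UNIV :: 'd set|"
  shows "\<exists>\<beta>::'d rel. Card_order \<beta> \<and> \<beta> =o r"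
proof -
  have FI: "|Field r| =o r" by (rule card_of_Field_ordIso[OF r])
  have "|Field r| \<le>o |UNIV :: 'd set|" by (rule ordIso_ordLeq_trans[OF FI le])
  then obtain B :: "'d set" where "|Field r| =o |B|"
    using internalize_card_of_ordLeq2[of "Field r" "UNIV :: 'd set"] by blast
  hence "|B| =o r" by (rule ordIso_transitive[OF ordIso_symmetric FI])
  thus ?thesis using card_of_Card_order by blast
qed

lemma cs_le_pow: "cardSuc |UNIV :: 's set| \<le>o |UNIV :: 's set set|"
proof -
  have "|UNIV :: 's set| <o |Pow (UNIV :: 's set)|" by (rule card_of_Pow)
  hence "cardSuc |UNIV :: 's set| \<le>o |Pow (UNIV :: 's set)|"
    using cardSuc_ordLess_ordLeq[OF card_of_Card_order card_of_Card_order] by blast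
  thus ?thesis by simp
qed

lemma inRHS:
  fixes r :: "'c rel"
  assumes r: "Card_order r" "infinite (Field r)" and le: "r \<le>o cardSuc |UNIV :: 's set|"
  shows "(Vstar r :: ('s \<Rightarrow> 'k::field) set) \<in> RHS"
proof -
  have "r \<le>o |UNIV :: 's set set|" by (rule ordLeq_transitive[OF le cs_le_pow])
  then obtain \<beta> :: "'s set rel" where c\<beta>: "Card_order \<beta>" and \<beta>r: "\<beta> =o r"
    using copy_card[OF r(1)] by blast
  have "r \<le>o \<beta>" using ordIso_symmetric[OF \<beta>r] unfolding ordIso_iff_ordLeq by (elim conjE)
  hence f\<beta>: "infinite (Field \<beta>)" by (rule infinite_mono[OF r(1) c\<beta> _ r(2)])
  have l\<beta>: "\<beta> \<le>o cardSuc |UNIV :: 's set|" by (rule ordIso_ordLeq_trans[OF \<beta>r le])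
  have "(Vstar r :: ('s \<Rightarrow> 'k) set) = Vstar \<beta>" by (rule Vstar_iso[OF ordIso_symmetric[OF \<beta>r]])
  thus ?thesis unfolding RHS_def inf_card_def using c\<beta> f\<beta> l\<beta> by blast
qed

lemma RHS_P:
  assumes "U \<in> (RHS :: ('s \<Rightarrow> 'k::field) set set)"
  shows "{v. finite (spt v)} \<subseteq> U \<and> dclosed U"
proof -
  obtain \<beta> :: "'s set rel" where U: "U = Vstar \<beta>" and c: "Card_order \<beta>" and f: "infinite (Field \<beta>)"
    using assms unfolding RHS_def inf_card_def by blast
  have "{v. finite (spt v)} \<subseteq> U" unfolding U Vstar_eq using fin_less[OF c f] by blast
  moreover have "dclosed U" unfolding dclosed_def U Vstar_eq
  proof (intro ballI allI impI)
    fix v w :: "'s \<Rightarrow> 'k" assume "v \<in> {v. |spt v| <o \<beta>}" "|spt w| \<le>o |spt v|"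
    thus "w \<in> {v. |spt v| <o \<beta>}" using ordLeq_ordLess_trans by simp
  qed
  ultimately show ?thesis by blast
qed

lemma P_RHS:
  assumes inf: "infinite (UNIV :: 's set)"
    and F: "{v. finite (spt v)} \<subseteq> U" and D: "dclosed (U :: ('s \<Rightarrow> 'k::field) set)"
  shows "U \<in> RHS"
proof (cases "U = UNIV")
  case True
  have c: "Card_order (cardSuc |UNIV :: 's set| )" by (rule cardSuc_Card_order[OF card_of_Card_order])
  have f: "infinite (Field (cardSuc |UNIV :: 's set| ))"
    by (rule infinite_mono[OF card_of_Card_order c cardSuc_ordLeq[OF card_of_Card_order]])
      (simp add: Field_card_of inf)
  have "(Vstar (cardSuc |UNIV :: 's set| ) :: ('s \<Rightarrow> 'k) set) = UNIV"
    unfolding Vstar_cardSuc[OF card_of_Card_order] using card_of_mono1[OF subset_UNIV] by blast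
  moreover have "(Vstar (cardSuc |UNIV :: 's set| ) :: ('s \<Rightarrow> 'k) set) \<in> RHS"
    by (rule inRHS[OF c f ordLeq_refl[OF c]])
  ultimately show ?thesis using True by simp
next
  case False
  let ?R = "{ |spt w| | w :: 's \<Rightarrow> 'k. w \<notin> U}"
  have "?R \<noteq> {}" using False by blast
  moreover have "\<forall>r\<in>?R. Well_order r" using card_of_Well_order by blast
  ultimately obtain r0 where "r0 \<in> ?R" and mn: "\<forall>r'\<in>?R. r0 \<le>o r'"
    using exists_minim_Well_order[of ?R] by blast
  then obtain w0 :: "'s \<Rightarrow> 'k" where r0: "r0 = |spt w0|" and w0: "w0 \<notin> U" by blast
  have mn': "|spt w0| \<le>o |spt w|" if "w \<notin> U" for w :: "'s \<Rightarrow> 'k"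
    using mn that r0 by blast
  have iw: "infinite (spt w0)" using F w0 by blast
  have "U = Vstar |spt w0|"
  proof (intro set_eqI iffI)
    fix v assume v: "v \<in> U"
    show "v \<in> Vstar |spt w0|"
    proof (rule ccontr)
      assume "v \<notin> Vstar |spt w0|"
      hence "\<not> |spt v| <o |spt w0|" by (simp add: Vstar_eq)
      hence "|spt w0| \<le>o |spt v|" using ordLess_or_ordLeq[OF card_of_Well_order card_of_Well_order] by blast
      hence "w0 \<in> U" using D v unfolding dclosed_def by blast
      with w0 show False by simp
    qed
  next
    fix v assume "v \<in> (Vstar |spt w0| :: ('s \<Rightarrow> 'k) set)"
    hence lt: "|spt v| <o |spt w0|" by (simp add: Vstar_eq)
    show "v \<in> U"
    proof (rule ccontr)
      assume "v \<notin> U"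
      hence "|spt w0| \<le>o |spt v|" by (rule mn')
      with lt show False using not_ordLess_ordLeq by blast
    qed
  qed
  moreover have "(Vstar |spt w0| :: ('s \<Rightarrow> 'k) set) \<in> RHS"
  proof (rule inRHS)
    show "Card_order |spt w0|" by (rule card_of_Card_order)
    show "infinite (Field |spt w0| )" using iw by (simp add: Field_card_of)
    have "|spt w0| \<le>o |UNIV :: 's set|" by (rule card_of_mono1[OF subset_UNIV])
    thus "|spt w0| \<le>o cardSuc |UNIV :: 's set|"
      by (rule ordLeq_transitive[OF _ cardSuc_ordLeq[OF card_of_Card_order]])
  qed
  ultimately show ?thesis by simp
qed

lemma soc_pre_UNIV: "soc_pre (UNIV :: ('s \<Rightarrow> 'k::field) set) = UNIV"
  unfolding soc_pre_def by blast

lemma filt_sub: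
  assumes inf: "infinite (UNIV :: 's set)"
  shows "X \<in> (soc_filt :: ('s \<Rightarrow> 'k::field) set set) \<Longrightarrow> X \<in> RHS"
proof (induction X rule: soc_filt.induct)
  case base
  have "{v::'s \<Rightarrow> 'k. finite (spt v)} \<in> RHS"
  proof (rule P_RHS[OF inf])
    show "dclosed {v::'s \<Rightarrow> 'k. finite (spt v)}" unfolding dclosed_def
      using card_of_ordLeq_finite by blast
  qed simp
  thus ?case using soc_zero[OF inf, where 'k='k] by simp
next
  case (succ X)
  obtain \<beta> :: "'s set rel" where X: "X = Vstar \<beta>" and c: "Card_order \<beta>" and f: "infinite (Field \<beta>)"
    and l: "\<beta> \<le>o cardSuc |UNIV :: 's set|"
    using succ.IH unfolding RHS_def inf_card_def by blast
  show ?case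
  proof (cases "\<beta> \<le>o |UNIV :: 's set|")
    case True
    have "soc_pre X = (Vstar (cardSuc \<beta>) :: ('s \<Rightarrow> 'k) set)" using soc_beta[OF c f True, where 'k='k] X by simp
    moreover have "(Vstar (cardSuc \<beta>) :: ('s \<Rightarrow> 'k) set) \<in> RHS"
    proof (rule inRHS)
      show "Card_order (cardSuc \<beta>)" by (rule cardSuc_Card_order[OF c])
      show "infinite (Field (cardSuc \<beta>))"
        by (rule infinite_mono[OF c cardSuc_Card_order[OF c] cardSuc_ordLeq[OF c] f])
      show "cardSuc \<beta> \<le>o cardSuc |UNIV :: 's set|"
        using cardSuc_mono_ordLeq[OF c card_of_Card_order] True by blast
    qed
    ultimately show ?thesis by simp
  next
    case False
    hence lt: "|UNIV :: 's set| <o \<beta>"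
      using ordLess_or_ordLeq[OF card_of_Well_order card_order_on_well_order_on[OF c]] by blast
    have "X = UNIV"
    proof (intro set_eqI iffI)
      fix v :: "'s \<Rightarrow> 'k"
      have "|spt v| \<le>o |UNIV :: 's set|" by (rule card_of_mono1[OF subset_UNIV])
      hence "|spt v| <o \<beta>" using lt by (rule ordLeq_ordLess_trans)
      thus "v \<in> X" unfolding X Vstar_eq by simp
    qed simp
    hence "soc_pre X = UNIV" by (simp add: soc_pre_UNIV)
    moreover have "(UNIV :: ('s \<Rightarrow> 'k) set) \<in> RHS"
      by (rule P_RHS[OF inf]) (auto simp: dclosed_def)
    ultimately show ?thesis by simp
  qed
next
  case (lim S)
  then obtain X0 where X0: "X0 \<in> S" by blast
  have PS: "{v. finite (spt v)} \<subseteq> X \<and> dclosed X" if "X \<in> S" for X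
    using lim that RHS_P by blast
  show ?case
  proof (rule P_RHS[OF inf])
    show "{v. finite (spt v)} \<subseteq> \<Union>S" using PS[OF X0] X0 by blast
    show "dclosed (\<Union>S)" unfolding dclosed_def
    proof (intro ballI allI impI)
      fix v w :: "'s \<Rightarrow> 'k" assume "v \<in> \<Union>S" "|spt w| \<le>o |spt v|"
      then obtain X where "X \<in> S" "v \<in> X" by blast
      with PS[OF this(1)] \<open>|spt w| \<le>o |spt v|\<close> have "w \<in> X" unfolding dclosed_def by blast
      thus "w \<in> \<Union>S" using \<open>X \<in> S\<close> by blast
    qed
  qed
qed

lemma RHS_sub:
  assumes inf: "infinite (UNIV :: 's set)" and X: "X \<in> (RHS :: ('s \<Rightarrow> 'k::field) set set)"
  shows "X \<in> soc_filt"
proof -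
  obtain \<beta> :: "'s set rel" where XX: "X = Vstar \<beta>" and c: "Card_order \<beta>" and f: "infinite (Field \<beta>)"
    using X unfolding RHS_def inf_card_def by blast
  have "(Vstar \<beta> :: ('s \<Rightarrow> 'k) set) \<in> soc_filt"
  proof (rule Vstar_union_filt[OF inf c f], intro allI impI)
    fix v :: "'s \<Rightarrow> 'k" assume "infinite (spt v)"
    thus "(Wle (spt v) :: ('s \<Rightarrow> 'k) set) \<in> soc_filt" by (rule Wle_filt[OF inf])
  qed
  thus ?thesis using XX by simp
qed

theorem mainTheorem8:
  assumes "infinite (UNIV :: 's set)"
    and "alg_closed TYPE('k::field_char_0)"
  shows "soc_pre {\<lambda>_::'s. 0::'k} = {v. finite {i. v i \<noteq> 0}}
    \<and> (\<forall>\<beta> :: 's set rel. inf_card \<beta> \<and> (\<beta>, card_of (UNIV :: 's set)) \<in> ordLeq \<longrightarrow>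
           soc_pre (Vstar \<beta> :: ('s \<Rightarrow> 'k) set) = Vstar (cardSuc \<beta>)
           \<and> rel_simple (Vstar \<beta> :: ('s \<Rightarrow> 'k) set) (Vstar (cardSuc \<beta>)))
    \<and> (soc_filt :: ('s \<Rightarrow> 'k) set set) =
           {Vstar \<beta> | \<beta> :: 's set rel. inf_card \<beta> \<and> (\<beta>, cardSuc (card_of (UNIV :: 's set))) \<in> ordLeq}"
proof (intro conjI allI impI)
  show "soc_pre {\<lambda>_::'s. 0::'k} = {v. finite {i. v i \<noteq> 0}}"
    using soc_zero[OF assms(1)] by (simp add: spt_def)
next
  fix \<beta> :: "'s set rel"
  assume a: "inf_card \<beta> \<and> (\<beta>, card_of (UNIV :: 's set)) \<in> ordLeq"
  hence c: "Card_order \<beta>" and f: "infinite (Field \<beta>)" and l: "\<beta> \<le>o |UNIV :: 's set|"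
    unfolding inf_card_def by blast+
  note sb = soc_beta[OF c f l, where 'k='k]
  show "soc_pre (Vstar \<beta> :: ('s \<Rightarrow> 'k) set) = Vstar (cardSuc \<beta>)" using sb by (elim conjE)
  show "rel_simple (Vstar \<beta> :: ('s \<Rightarrow> 'k) set) (Vstar (cardSuc \<beta>))" using sb by (elim conjE)
next
  have "(soc_filt :: ('s \<Rightarrow> 'k) set set) = RHS"
    using filt_sub[OF assms(1)] RHS_sub[OF assms(1)] by blast
  thus "(soc_filt :: ('s \<Rightarrow> 'k) set set) =
           {Vstar \<beta> | \<beta> :: 's set rel. inf_card \<beta> \<and> (\<beta>, cardSuc (card_of (UNIV :: 's set))) \<in> ordLeq}"
    by (simp add: RHS_def)
qed

end
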